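(* For $n=4$: $\mathbb{O}_{4,0}\simeq\mathbb{O}_{2,2}$ and $\mathbb{O}_{3,1}\simeq\mathbb{O}_{1,3}$ (as graded algebras).
   Context: $\mathbb{Z}_2=\{0,1\}$. For $p+q=n\ge3$, $\mathbb{O}_{p,q}$ is the real algebra with basis $\{u_x: x\in\mathbb{Z}_2^n\}$ and product $u_x\cdot u_y=(-1)^{f(x,y)}u_{x+y}$, where $f(x,y)=\sum_{1\le i<j<k\le n}(x_ix_jy_k+x_iy_jx_k+y_ix_jx_k)+\sum_{1\le i\le j\le n}x_iy_j+\sum_{1\le i\le p}x_iy_i$. A graded isomorphism is an algebra isomorphism sending each homogeneous element (scalar multiple of some $u_x$) to a homogeneous element. *)

theory Defs
  imports Complex_Main
begin

text \<open>Elements of Z_2^n are boolean lists of length n; coordinate i (1-based in the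
paper) is x ! (i-1). Elements of O_{p,q} are real coefficient functions on
Z_2^n (zero outside Z_2^n); u_x is the indicator of x.\<close>

definition Zn :: "nat \<Rightarrow> bool list set" where
  "Zn n = {x. length x = n}"

definition vadd :: "bool list \<Rightarrow> bool list \<Rightarrow> bool list" where
  "vadd x y = map2 (\<noteq>) x y"

definition bi :: "bool \<Rightarrow> nat" where
  "bi b = (if b then 1 else 0)"

definition ftw :: "nat \<Rightarrow> nat \<Rightarrow> bool list \<Rightarrow> bool list \<Rightarrow> nat" where
  "ftw p n x y =
     (\<Sum>k<n. \<Sum>j<k. \<Sum>i<j.
        bi (x!i) * bi (x!j) * bi (y!k) + bi (x!i) * bi (y!j) * bi (x!k)
        + bi (y!i) * bi (x!j) * bi (x!k))
   + (\<Sum>j<n. \<Sum>i\<le>j. bi (x!i) * bi (y!j))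
   + (\<Sum>i<p. bi (x!i) * bi (y!i))"

definition Ocarrier :: "nat \<Rightarrow> (bool list \<Rightarrow> real) set" where
  "Ocarrier n = {a. \<forall>x. x \<notin> Zn n \<longrightarrow> a x = 0}"

definition ubasis :: "nat \<Rightarrow> bool list \<Rightarrow> bool list \<Rightarrow> real" where
  "ubasis n x = (\<lambda>z. if z = x then 1 else 0)"

text \<open>Product of O_{p,q}: bilinear extension of u_x u_y = (-1)^f(x,y) u_{x+y}.\<close>
definition Omult :: "nat \<Rightarrow> nat \<Rightarrow> (bool list \<Rightarrow> real) \<Rightarrow> (bool list \<Rightarrow> real) \<Rightarrow> bool list \<Rightarrow> real" where
  "Omult p q a b = (\<lambda>z. if z \<in> Zn (p+q) then
       (\<Sum>x\<in>Zn (p+q). (-1) ^ ftw p (p+q) x (vadd x z) * a x * b (vadd x z))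
     else 0)"

definition homogeneous :: "nat \<Rightarrow> (bool list \<Rightarrow> real) \<Rightarrow> bool" where
  "homogeneous n a \<longleftrightarrow> (\<exists>x\<in>Zn n. \<exists>c::real. a = (\<lambda>z. c * ubasis n x z))"

definition graded_iso :: "nat \<Rightarrow> nat \<Rightarrow> nat \<Rightarrow> nat \<Rightarrow>
    ((bool list \<Rightarrow> real) \<Rightarrow> (bool list \<Rightarrow> real)) \<Rightarrow> bool" where
  "graded_iso p q p' q' \<phi> \<longleftrightarrow>
     p + q = p' + q' \<and>
     bij_betw \<phi> (Ocarrier (p+q)) (Ocarrier (p'+q')) \<and>
     (\<forall>a\<in>Ocarrier (p+q). \<forall>b\<in>Ocarrier (p+q). \<phi> (\<lambda>z. a z + b z) = (\<lambda>z. \<phi> a z + \<phi> b z)) \<and>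
     (\<forall>a\<in>Ocarrier (p+q). \<forall>c::real. \<phi> (\<lambda>z. c * a z) = (\<lambda>z. c * \<phi> a z)) \<and>
     (\<forall>a\<in>Ocarrier (p+q). \<forall>b\<in>Ocarrier (p+q). \<phi> (Omult p q a b) = Omult p' q' (\<phi> a) (\<phi> b)) \<and>
     (\<forall>a\<in>Ocarrier (p+q). homogeneous (p+q) a \<longrightarrow> homogeneous (p'+q') (\<phi> a))"

definition graded_isomorphic :: "nat \<Rightarrow> nat \<Rightarrow> nat \<Rightarrow> nat \<Rightarrow> bool" where
  "graded_isomorphic p q p' q' \<longleftrightarrow> (\<exists>\<phi>. graded_iso p q p' q' \<phi>)"

end

theory Submission imports Defs begin
lemma vadd_Zn: "x \<in> Zn n \<Longrightarrow> y \<in> Zn n \<Longrightarrow> vadd x y \<in> Zn n"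
  by (simp add: Zn_def vadd_def)

lemma vadd_cancel: "x \<in> Zn n \<Longrightarrow> y \<in> Zn n \<Longrightarrow> vadd x (vadd x y) = y"
  unfolding Zn_def vadd_def
  by (auto intro!: nth_equalityI)

lemma gen_iso:
  fixes \<sigma> \<tau> :: "bool list \<Rightarrow> bool list" and sg :: "bool list \<Rightarrow> real"
  assumes n: "p + q = n" "p' + q' = n"
    and sZ: "\<And>x. x \<in> Zn n \<Longrightarrow> \<sigma> x \<in> Zn n"
    and tZ: "\<And>x. x \<in> Zn n \<Longrightarrow> \<tau> x \<in> Zn n"
    and ts: "\<And>x. x \<in> Zn n \<Longrightarrow> \<tau> (\<sigma> x) = x"
    and st: "\<And>x. x \<in> Zn n \<Longrightarrow> \<sigma> (\<tau> x) = x"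
    and lin: "\<And>x y. x \<in> Zn n \<Longrightarrow> y \<in> Zn n \<Longrightarrow> \<sigma> (vadd x y) = vadd (\<sigma> x) (\<sigma> y)"
    and sq: "\<And>x. sg x * sg x = 1"
    and cond: "\<And>x y. x \<in> Zn n \<Longrightarrow> y \<in> Zn n \<Longrightarrow>
       (-1) ^ ftw p' n (\<sigma> x) (\<sigma> y) * sg x * sg y = sg (vadd x y) * (-1) ^ ftw p n x y"
  shows "graded_isomorphic p q p' q'"
proof -
  define \<phi> where "\<phi> a = (\<lambda>z. if z \<in> Zn n then sg (\<tau> z) * a (\<tau> z) else 0)" for a :: "bool list \<Rightarrow> real"
  define \<psi> where "\<psi> b = (\<lambda>x. if x \<in> Zn n then sg x * b (\<sigma> x) else 0)" for b :: "bool list \<Rightarrow> real"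
  have bij: "bij_betw \<phi> (Ocarrier n) (Ocarrier n)"
  proof (rule bij_betw_byWitness[where f'=\<psi>])
    show "\<forall>a\<in>Ocarrier n. \<psi> (\<phi> a) = a"
    proof
      fix a assume a: "a \<in> Ocarrier n"
      show "\<psi> (\<phi> a) = a"
      proof
        fix x show "\<psi> (\<phi> a) x = a x"
          using a sZ ts sq unfolding \<phi>_def \<psi>_def Ocarrier_def
          by (auto simp: mult.assoc[symmetric])
      qed
    qed
    show "\<forall>b\<in>Ocarrier n. \<phi> (\<psi> b) = b"
    proof
      fix b assume b: "b \<in> Ocarrier n"
      show "\<phi> (\<psi> b) = b"
      proof
        fix x show "\<phi> (\<psi> b) x = b x"
          using b tZ st sq unfolding \<phi>_def \<psi>_def Ocarrier_def
          by (auto simp: mult.assoc[symmetric])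
      qed
    qed
    show "\<phi> ` Ocarrier n \<subseteq> Ocarrier n" unfolding \<phi>_def Ocarrier_def by auto
    show "\<psi> ` Ocarrier n \<subseteq> Ocarrier n" unfolding \<psi>_def Ocarrier_def by auto
  qed
  have sbij: "bij_betw \<sigma> (Zn n) (Zn n)"
    by (rule bij_betw_byWitness[where f'=\<tau>]) (use sZ tZ ts st in auto)
  have mult: "\<phi> (Omult p q a b) = Omult p' q' (\<phi> a) (\<phi> b)" for a b
  proof
    fix z
    show "\<phi> (Omult p q a b) z = Omult p' q' (\<phi> a) (\<phi> b) z"
    proof (cases "z \<in> Zn n")
      case False thus ?thesis using n unfolding \<phi>_def Omult_def by auto
    next
      case True
      define w where "w = \<tau> z"
      have w: "w \<in> Zn n" using tZ True w_def by auto
      have zw: "z = \<sigma> w" using st True w_def by auto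
      have "Omult p' q' (\<phi> a) (\<phi> b) z =
          (\<Sum>x'\<in>Zn n. (-1) ^ ftw p' n x' (vadd x' z) * \<phi> a x' * \<phi> b (vadd x' z))"
        using True n unfolding Omult_def by simp
      also have "\<dots> = (\<Sum>x\<in>Zn n. (-1) ^ ftw p' n (\<sigma> x) (vadd (\<sigma> x) z) * \<phi> a (\<sigma> x) * \<phi> b (vadd (\<sigma> x) z))"
        by (rule sum.reindex_bij_betw[symmetric, OF sbij])
      also have "\<dots> = (\<Sum>x\<in>Zn n. sg w * ((-1) ^ ftw p n x (vadd x w) * a x * b (vadd x w)))"
      proof (rule sum.cong[OF refl])
        fix x assume x: "x \<in> Zn n"
        have xw: "vadd x w \<in> Zn n" using x w vadd_Zn by blast
        have e: "vadd (\<sigma> x) z = \<sigma> (vadd x w)" using lin[OF x w] zw by simp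
        have c: "(-1) ^ ftw p' n (\<sigma> x) (\<sigma> (vadd x w)) * sg x * sg (vadd x w)
            = sg w * (-1) ^ ftw p n x (vadd x w)"
          using cond[OF x xw] vadd_cancel[OF x w] by simp
        have "(-1) ^ ftw p' n (\<sigma> x) (vadd (\<sigma> x) z) * \<phi> a (\<sigma> x) * \<phi> b (vadd (\<sigma> x) z)
           = ((-1) ^ ftw p' n (\<sigma> x) (\<sigma> (vadd x w)) * sg x * sg (vadd x w)) * a x * b (vadd x w)"
          unfolding e \<phi>_def using sZ[OF x] sZ[OF xw] ts[OF x] ts[OF xw] by simp
        also have "\<dots> = sg w * ((-1) ^ ftw p n x (vadd x w) * a x * b (vadd x w))"
          unfolding c by simp
        finally show "(-1) ^ ftw p' n (\<sigma> x) (vadd (\<sigma> x) z) * \<phi> a (\<sigma> x) * \<phi> b (vadd (\<sigma> x) z)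
           = sg w * ((-1) ^ ftw p n x (vadd x w) * a x * b (vadd x w))" .
      qed
      also have "\<dots> = \<phi> (Omult p q a b) z"
        unfolding \<phi>_def Omult_def using True w n by (simp add: w_def sum_distrib_left)
      finally show ?thesis by simp
    qed
  qed
  have hom: "homogeneous n (\<phi> a)" if H: "homogeneous n a" for a
  proof -
    obtain x c where x: "x \<in> Zn n" and a: "a = (\<lambda>z. c * ubasis n x z)"
      using H unfolding homogeneous_def by blast
    have "\<phi> a = (\<lambda>z. (sg x * c) * ubasis n (\<sigma> x) z)"
    proof
      fix z show "\<phi> a z = (sg x * c) * ubasis n (\<sigma> x) z"
        unfolding \<phi>_def a ubasis_def using x sZ ts st by auto
    qed
    thus ?thesis unfolding homogeneous_def using sZ[OF x] by blast
  qed
  have "graded_iso p q p' q' \<phi>"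
    unfolding graded_iso_def n
    using bij mult hom
    by (auto simp: \<phi>_def Ocarrier_def algebra_simps)
  thus ?thesis unfolding graded_isomorphic_def by blast
qed

definition L4 :: "bool list list" where
 "L4 = [[a,b,c,d]. a \<leftarrow> [False,True], b \<leftarrow> [False,True], c \<leftarrow> [False,True], d \<leftarrow> [False,True]]"

lemma Zn4: "x \<in> Zn 4 \<Longrightarrow> \<exists>a b c d. x = [a,b,c,d]"
  by (simp add: Zn_def numeral_eq_Suc length_Suc_conv) blast

lemma Zn4_L4: "x \<in> Zn 4 \<Longrightarrow> x \<in> set L4"
proof -
  assume "x \<in> Zn 4"
  then obtain a b c d where "x = [a,b,c,d]" using Zn4 by blast
  then show ?thesis by (cases a; cases b; cases c; cases d) (simp_all add: L4_def)
qed

lemma par: "even (m + k) \<Longrightarrow> (-1::real) ^ m = (-1) ^ k"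
  by (auto simp: minus_one_power_iff)

lemma inst:
  fixes \<sigma> \<tau> :: "bool list \<Rightarrow> bool list" and sb :: "bool list \<Rightarrow> bool"
  assumes n: "p + q = 4" "p' + q' = 4"
    and sZ: "\<And>x. x \<in> Zn 4 \<Longrightarrow> \<sigma> x \<in> Zn 4"
    and tZ: "\<And>x. x \<in> Zn 4 \<Longrightarrow> \<tau> x \<in> Zn 4"
    and ts: "\<And>x. x \<in> Zn 4 \<Longrightarrow> \<tau> (\<sigma> x) = x"
    and st: "\<And>x. x \<in> Zn 4 \<Longrightarrow> \<sigma> (\<tau> x) = x"
    and lin: "\<And>x y. x \<in> Zn 4 \<Longrightarrow> y \<in> Zn 4 \<Longrightarrow> \<sigma> (vadd x y) = vadd (\<sigma> x) (\<sigma> y)"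
    and ev: "\<forall>x\<in>set L4. \<forall>y\<in>set L4. even (ftw p' 4 (\<sigma> x) (\<sigma> y) + ftw p 4 x y + bi (sb x) + bi (sb y) + bi (sb (vadd x y)))"
  shows "graded_isomorphic p q p' q'"
proof (rule gen_iso[OF n sZ tZ ts st lin, where sg = "\<lambda>x. (-1) ^ bi (sb x)"])
  show "(-1::real) ^ bi (sb x) * (-1) ^ bi (sb x) = 1" for x
    by (simp add: power_add[symmetric])
  fix x y assume x: "x \<in> Zn 4" and y: "y \<in> Zn 4"
  define A where "A = ftw p' 4 (\<sigma> x) (\<sigma> y)"
  define B where "B = ftw p 4 x y"
  define bx where "bx = bi (sb x)"
  define by' where "by' = bi (sb y)"
  define bxy where "bxy = bi (sb (vadd x y))"
  have e0: "even (A + B + bx + by' + bxy)"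
    using ev Zn4_L4[OF x] Zn4_L4[OF y] unfolding A_def B_def bx_def by'_def bxy_def by blast
  have eq: "(A + bx + by') + (bxy + B) = A + B + bx + by' + bxy" by simp
  have e: "even ((A + bx + by') + (bxy + B))" using e0 unfolding eq .
  have "(-1::real) ^ (A + bx + by') = (-1) ^ (bxy + B)" using par[OF e] .
  then have "(-1::real) ^ A * (-1) ^ bx * (-1) ^ by' = (-1) ^ bxy * (-1) ^ B"
    unfolding power_add by simp
  then show "(-1::real) ^ ftw p' 4 (\<sigma> x) (\<sigma> y) * (-1) ^ bi (sb x) * (-1) ^ bi (sb y) =
        (-1) ^ bi (sb (vadd x y)) * (-1) ^ ftw p 4 x y"
    unfolding A_def B_def bx_def by'_def bxy_def .
qed

definition sig1 :: "bool list \<Rightarrow> bool list" where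
 "sig1 x = [x!3, (x!0 \<noteq> x!1) \<noteq> x!2, x!2, x!1]"
definition tau1 :: "bool list \<Rightarrow> bool list" where
 "tau1 c = [(c!1 \<noteq> c!3) \<noteq> c!2, c!3, c!2, c!0]"
definition sb1 :: "bool list \<Rightarrow> bool" where
 "sb1 x = (x \<in> set [[True, False, False, True], [False, True, True, False], [True, True, True, False], [True, True, False, True], [True, False, True, True], [False, True, True, True]])"

definition sig2 :: "bool list \<Rightarrow> bool list" where
 "sig2 x = [(x!0 \<noteq> x!1) \<noteq> x!2, x!3, x!2, x!1]"
definition tau2 :: "bool list \<Rightarrow> bool list" where
 "tau2 c = [(c!0 \<noteq> c!3) \<noteq> c!2, c!3, c!2, c!1]"
definition sb2 :: "bool list \<Rightarrow> bool" where
 "sb2 x = (x \<in> set [[False, False, True, True], [False, True, False, True], [False, True, True, False], [False, True, True, True], [True, False, True, True], [True, True, False, True], [True, True, True, False], [True, True, True, True]])"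

lemma ev1: "\<forall>x\<in>set L4. \<forall>y\<in>set L4. even (ftw 2 4 (sig1 x) (sig1 y) + ftw 4 4 x y + bi (sb1 x) + bi (sb1 y) + bi (sb1 (vadd x y)))"
  by code_simp

lemma ev2: "\<forall>x\<in>set L4. \<forall>y\<in>set L4. even (ftw 1 4 (sig2 x) (sig2 y) + ftw 3 4 x y + bi (sb2 x) + bi (sb2 y) + bi (sb2 (vadd x y)))"
  by code_simp

lemma iso1: "graded_isomorphic 4 0 2 2"
proof (rule inst[OF _ _ _ _ _ _ _ ev1, where \<tau> = tau1])
  show "\<And>x. x \<in> Zn 4 \<Longrightarrow> sig1 x \<in> Zn 4" "\<And>x. x \<in> Zn 4 \<Longrightarrow> tau1 x \<in> Zn 4"
    by (auto simp: Zn_def sig1_def tau1_def)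
  show "\<And>x. x \<in> Zn 4 \<Longrightarrow> tau1 (sig1 x) = x" "\<And>x. x \<in> Zn 4 \<Longrightarrow> sig1 (tau1 x) = x"
    by (auto dest!: Zn4 simp: sig1_def tau1_def)
  show "\<And>x y. x \<in> Zn 4 \<Longrightarrow> y \<in> Zn 4 \<Longrightarrow> sig1 (vadd x y) = vadd (sig1 x) (sig1 y)"
    by (auto dest!: Zn4 simp: sig1_def vadd_def)
qed simp_all

lemma iso2: "graded_isomorphic 3 1 1 3"
proof (rule inst[OF _ _ _ _ _ _ _ ev2, where \<tau> = tau2])
  show "\<And>x. x \<in> Zn 4 \<Longrightarrow> sig2 x \<in> Zn 4" "\<And>x. x \<in> Zn 4 \<Longrightarrow> tau2 x \<in> Zn 4"
    by (auto simp: Zn_def sig2_def tau2_def)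
  show "\<And>x. x \<in> Zn 4 \<Longrightarrow> tau2 (sig2 x) = x" "\<And>x. x \<in> Zn 4 \<Longrightarrow> sig2 (tau2 x) = x"
    by (auto dest!: Zn4 simp: sig2_def tau2_def)
  show "\<And>x y. x \<in> Zn 4 \<Longrightarrow> y \<in> Zn 4 \<Longrightarrow> sig2 (vadd x y) = vadd (sig2 x) (sig2 y)"
    by (auto dest!: Zn4 simp: sig2_def vadd_def)
qed simp_all

theorem mainTheorem5:
  shows "graded_isomorphic 4 0 2 2 \<and> graded_isomorphic 3 1 1 3"
  using iso1 iso2 by simp

end
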